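(* Let $\alpha\in(0,1)$ and let $Z_1,Z_2,\dots$ be i.i.d. with $P(Z=k)=(-1)^{k-1}\binom{\alpha}{k}$, $k=1,2,\dots$. Let $\sigma_\alpha(0)=0$, $\sigma_\alpha(n)=\sum_{j=1}^nZ_j$, and $L_\alpha(t)=\max\{n\in\mathbb{N}_0:\sigma_\alpha(n)\le t\}$, $t\in\mathbb{N}_0$. Then for all $t,t_1,t_2\in\mathbb{N}_0$, $$\mathbb{E}[L_\alpha(t)]=\binom{t+\alpha}{t}-1,\qquad \mathbb{E}[L_\alpha(t)^2]=2\binom{t+2\alpha}{t}-3\binom{t+\alpha}{t}+1,$$ $$\mathbb{E}[L_\alpha(t_1)L_\alpha(t_2)]=\sum_{\ell=1}^{\min(t_1,t_2)}\binom{\ell+\alpha-1}{\ell}\left[\binom{t_1-\ell+\alpha}{t_1-\ell}+\binom{t_2-\ell+\alpha}{t_2-\ell}-1\right].$$ Moreover, for fixed $t_1\in\mathbb{N}$, as $t_2\to\infty$, $$\mathrm{Corr}[L_\alpha(t_1),L_\alpha(t_2)]=\frac{\mathrm{Cov}[L_\alpha(t_1),L_\alpha(t_2)]}{\sqrt{\mathbb{V}[L_\alpha(t_1)]\,\mathbb{V}[L_\alpha(t_2)]}}\sim C\,t_2^{-\alpha}$$ for a constant $C=C(t_1,\alpha)$.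
   Context: $\mathbb{N}_0=\mathbb{N}\cup\{0\}$. For real $x$ and $k\in\mathbb{N}_0$, $\binom{x}{k}=x(x-1)\cdots(x-k+1)/k!$. $\mathbb{V}$ denotes variance and $f\sim g$ means $f/g\to1$. *)

theory Defs
  imports "HOL-Probability.Probability"
begin

definition covariance :: "'a measure \<Rightarrow> ('a \<Rightarrow> real) \<Rightarrow> ('a \<Rightarrow> real) \<Rightarrow> real" where
  "covariance M X Y = integral\<^sup>L M (\<lambda>x. (X x - integral\<^sup>L M X) * (Y x - integral\<^sup>L M Y))"

definition sigma_sum :: "(nat \<Rightarrow> 'a \<Rightarrow> nat) \<Rightarrow> nat \<Rightarrow> 'a \<Rightarrow> nat" where
  "sigma_sum Z n \<omega> = (\<Sum>j=1..n. Z j \<omega>)"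

definition L_count :: "(nat \<Rightarrow> 'a \<Rightarrow> nat) \<Rightarrow> nat \<Rightarrow> 'a \<Rightarrow> nat" where
  "L_count Z t \<omega> = Max {n. sigma_sum Z n \<omega> \<le> t}"

end

theory Submission
  imports Defs "HOL-Computational_Algebra.Formal_Power_Series" "HOL-Real_Asymp.Real_Asymp"
begin

definition GG :: "real \<Rightarrow> nat \<Rightarrow> real" where "GG a k = (-1)^k * (a gchoose k)"
definition BB :: "real \<Rightarrow> nat \<Rightarrow> real" where "BB b t = (real t + b) gchoose t"
definition pp :: "real \<Rightarrow> nat \<Rightarrow> real" where "pp a k = (-1)^(k-1) * (a gchoose k)"
definition cc :: "real \<Rightarrow> nat \<Rightarrow> real" where "cc a l = (real l + a - 1) gchoose l"

lemma GG_conv: "(\<Sum>k\<le>t. GG a k * GG b (t-k)) = GG (a+b) t"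
proof -
  have "(\<Sum>k\<le>t. GG a k * GG b (t-k)) = (\<Sum>k\<le>t. (-1)^t * ((a gchoose k) * (b gchoose (t-k))))"
    by (intro sum.cong refl) (auto simp: GG_def power_add[symmetric])
  also have "\<dots> = (-1)^t * (\<Sum>k\<le>t. (a gchoose k) * (b gchoose (t-k)))"
    by (simp add: sum_distrib_left)
  also have "\<dots> = GG (a+b) t" using gbinomial_Vandermonde[of a b t]
    by (simp add: GG_def atMost_atLeast0)
  finally show ?thesis .
qed

lemma BB_GG: "BB b t = GG (-b-1) t"
proof -
  have h: "(-b-1) gchoose t = (-1)^t * ((b + real t) gchoose t)"
  proof -
    have "(-(b+1)) gchoose t = (-1)^t * ((b+1 + real t - 1) gchoose t)" by (rule gbinomial_minus)
    moreover have "b + 1 + real t - 1 = b + real t" "-(b+1) = -b-1" by simp_all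
    ultimately show ?thesis by simp
  qed
  have "(-1::real)^t * (-1)^t = 1" by (simp flip: power_add)
  then show ?thesis by (simp add: BB_def GG_def h algebra_simps)
qed

lemma BB_0: "BB 0 t = 1"
  using binomial_gbinomial[of t t, where 'a=real] by (simp add: BB_def)

lemma cc_BB: "cc a l = BB (a-1) l" by (simp add: cc_def BB_def algebra_simps)

lemma GG0: "t \<ge> 1 \<Longrightarrow> GG 0 t = 0"
  by (cases t) (auto simp: GG_def gbinomial_0)

lemma GGm1: "GG (-1) t = 1"
  using BB_GG[of 0 t] binomial_gbinomial[of t t, where 'a=real] by (simp add: BB_def)

lemma pp_GG: "k \<ge> 1 \<Longrightarrow> pp a k = - GG a k"
  by (cases k) (auto simp: pp_def GG_def)

lemma conv1: "(\<Sum>k=1..t. pp a k * f k) = f 0 * GG a 0 - (\<Sum>k\<le>t. GG a k * f k)"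
proof -
  have "(\<Sum>k\<le>t. GG a k * f k) = GG a 0 * f 0 + (\<Sum>k=1..t. GG a k * f k)"
    by (simp add: atMost_atLeast0 sum.atLeast_Suc_atMost)
  moreover have "(\<Sum>k=1..t. pp a k * f k) = - (\<Sum>k=1..t. GG a k * f k)"
    by (simp add: pp_GG sum_negf[symmetric])
  ultimately show ?thesis by (simp add: GG_def)
qed

lemma renew_cc: "t \<ge> 1 \<Longrightarrow> (\<Sum>k=1..t. pp a k * cc a (t-k)) = cc a t"
proof -
  assume t: "t \<ge> 1"
  have "(\<Sum>k\<le>t. GG a k * cc a (t-k)) = GG (a + (-(a-1)-1)) t"
    by (simp add: cc_BB BB_GG GG_conv)
  also have "\<dots> = 0" using t by (simp add: GG0)
  moreover have "(\<Sum>k=1..t. pp a k * cc a (t-k)) = cc a (t-0) * GG a 0 - (\<Sum>k\<le>t. GG a k * cc a (t-k))"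
    by (rule conv1[where f="\<lambda>k. cc a (t-k)"])
  ultimately show ?thesis by (simp add: GG_def)
qed

lemma renew_BB: "(\<Sum>k=1..t. pp a k * BB b (t-k)) = BB b t - BB (b-a) t"
proof -
  have "(\<Sum>k\<le>t. GG a k * BB b (t-k)) = GG (a + (-b-1)) t"
    by (simp add: BB_GG GG_conv)
  also have "\<dots> = BB (b-a) t" by (simp add: BB_GG algebra_simps)
  finally have e: "(\<Sum>k\<le>t. GG a k * BB b (t-k)) = BB (b-a) t" .
  have "(\<Sum>k=1..t. pp a k * BB b (t-k)) = BB b (t-0) * GG a 0 - (\<Sum>k\<le>t. GG a k * BB b (t-k))"
    by (rule conv1[where f="\<lambda>k. BB b (t-k)"])
  then show ?thesis using e by (simp add: GG_def)
qed

lemma sum_cc: "(\<Sum>l\<le>t. cc a l) = BB a t"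
proof -
  have "(\<Sum>l\<le>t. cc a l) = (\<Sum>l\<le>t. GG (-a) l * GG (-1) (t-l))"
    by (simp add: GGm1 cc_BB BB_GG)
  also have "\<dots> = BB a t" by (simp add: GG_conv BB_GG)
  finally show ?thesis .
qed

lemma sum_cc1: "(\<Sum>l=1..t. cc a l) = BB a t - 1"
  using sum_cc[of a t] by (simp add: atMost_atLeast0 sum.atLeast_Suc_atMost cc_def)

lemma conv_cc_BB: "(\<Sum>l\<le>t. cc a l * BB a (t-l)) = BB (2*a) t"
proof -
  have "(\<Sum>l\<le>t. cc a l * BB a (t-l)) = (\<Sum>l\<le>t. GG (-a) l * GG (-a-1) (t-l))"
    by (simp add: cc_BB BB_GG)
  also have "\<dots> = BB (2*a) t" by (simp add: GG_conv BB_GG)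
  finally show ?thesis .
qed

lemma cc0: "cc a 0 = 1" by (simp add: cc_def)

lemma sum_P: "(\<Sum>k\<le>j. (if k = 0 then 0 else pp a k) * f k) = (\<Sum>k=1..j. pp a k * f k)"
  by (simp add: atMost_atLeast0 sum.atLeast_Suc_atMost)

lemma renew_gen:
  "(\<Sum>k=1..t. pp a k * (g (t-k) + (\<Sum>l=1..t-k. cc a l * g (t-k-l)))) = (\<Sum>l=1..t. cc a l * g (t-l))"
proof -
  define P where "P k = (if k = 0 then 0 else pp a k)" for k
  have inner: "g s + (\<Sum>l=1..s. cc a l * g (s-l)) = (\<Sum>l\<le>s. cc a l * g (s-l))" for s
    by (simp add: atMost_atLeast0 sum.atLeast_Suc_atMost cc0)
  have "(\<Sum>k=1..t. pp a k * (g (t-k) + (\<Sum>l=1..t-k. cc a l * g (t-k-l))))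
      = (\<Sum>k\<le>t. P k * (\<Sum>l\<le>t-k. cc a l * g (t-k-l)))"
    unfolding P_def sum_P inner by simp
  also have "\<dots> = (\<Sum>k\<le>t. \<Sum>l\<le>t-k. P k * cc a l * g (t-k-l))"
    by (simp add: sum_distrib_left mult.assoc)
  also have "\<dots> = (\<Sum>(k,l)\<in>{(k,l). k+l \<le> t}. P k * cc a l * g (t-k-l))"
  proof -
    have "{(k,l). k+l \<le> t} = Sigma {..t} (\<lambda>k. {..t-k})" by auto
    then show ?thesis by (simp add: sum.Sigma)
  qed
  also have "\<dots> = (\<Sum>j\<le>t. \<Sum>k\<le>j. P k * cc a (j-k) * g (t-k-(j-k)))"
    by (rule sum.triangle_reindex_eq)
  also have "\<dots> = (\<Sum>j\<le>t. g (t-j) * (\<Sum>k\<le>j. P k * cc a (j-k)))"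
    by (intro sum.cong refl) (auto simp: sum_distrib_left intro!: sum.cong)
  also have "\<dots> = (\<Sum>j\<le>t. g (t-j) * (if j = 0 then 0 else cc a j))"
  proof (intro sum.cong refl)
    fix j assume "j \<in> {..t}"
    show "g (t-j) * (\<Sum>k\<le>j. P k * cc a (j-k)) = g (t-j) * (if j = 0 then 0 else cc a j)"
    proof (cases "j = 0")
      case True then show ?thesis by (simp add: P_def)
    next
      case False
      then have "(\<Sum>k\<le>j. P k * cc a (j-k)) = cc a j"
        unfolding P_def sum_P by (intro renew_cc) simp
      then show ?thesis using False by simp
    qed
  qed
  also have "\<dots> = (\<Sum>l=1..t. cc a l * g (t-l))"
    by (simp add: atMost_atLeast0 sum.atLeast_Suc_atMost mult.commute)
  finally show ?thesis .
qed

fun Lc :: "nat \<Rightarrow> nat list \<Rightarrow> nat" where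
  "Lc t [] = 0"
| "Lc t (k#ws) = (if k \<le> t then 1 + Lc (t-k) ws else 0)"

definition LS :: "nat \<Rightarrow> nat \<Rightarrow> nat list set" where
  "LS N T = {ws. set ws \<subseteq> {1..N} \<and> length ws = T}"

definition EE :: "(nat \<Rightarrow> real) \<Rightarrow> nat \<Rightarrow> nat \<Rightarrow> (nat list \<Rightarrow> real) \<Rightarrow> real" where
  "EE q N T f = (\<Sum>ws\<in>LS N T. f ws * prod_list (map q ws))"

lemma LS_finite: "finite (LS N T)"
  unfolding LS_def by (rule finite_lists_length_eq) simp

lemma LS_0: "LS N 0 = {[]}" by (auto simp: LS_def)

lemma LS_Suc: "LS N (Suc T) = (\<lambda>(k,ws). k#ws) ` ({1..N} \<times> LS N T)"
  by (auto simp: LS_def length_Suc_conv image_iff)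

lemma EE_0: "EE q N 0 f = f []" by (simp add: EE_def LS_0)

lemma EE_Suc: "EE q N (Suc T) f = (\<Sum>k=1..N. q k * EE q N T (\<lambda>ws. f (k#ws)))"
proof -
  have inj: "inj_on (\<lambda>(k,ws). k#ws) ({1..N} \<times> LS N T)" by (auto simp: inj_on_def)
  have "EE q N (Suc T) f = (\<Sum>(k,ws)\<in>{1..N} \<times> LS N T. f (k#ws) * prod_list (map q (k#ws)))"
    unfolding EE_def LS_Suc by (subst sum.reindex[OF inj]) (simp add: case_prod_unfold)
  also have "\<dots> = (\<Sum>k=1..N. \<Sum>ws\<in>LS N T. q k * (f (k#ws) * prod_list (map q ws)))"
    by (subst sum.cartesian_product[symmetric]) (simp add: mult_ac)
  also have "\<dots> = (\<Sum>k=1..N. q k * EE q N T (\<lambda>ws. f (k#ws)))"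
    by (simp add: EE_def sum_distrib_left)
  finally show ?thesis .
qed

lemma EE_zero[simp]: "EE q N T (\<lambda>_. 0) = 0" by (simp add: EE_def)

lemma EE_add: "EE q N T (\<lambda>ws. f ws + g ws) = EE q N T f + EE q N T g"
  by (simp add: EE_def sum.distrib distrib_right)

lemma EE_cmult: "EE q N T (\<lambda>ws. c * f ws) = c * EE q N T f"
  by (simp add: EE_def sum_distrib_left mult.assoc)

lemma EE_diff: "EE q N T (\<lambda>ws. f ws - g ws) = EE q N T f - EE q N T g"
  by (simp add: EE_def sum_subtractf left_diff_distrib)

lemma EE_one: "(\<Sum>k=1..N. q k) = 1 \<Longrightarrow> EE q N T (\<lambda>_. 1) = 1"
  by (induction T) (simp_all add: EE_0 EE_Suc flip: sum_distrib_right)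

lemma EE_const: "(\<Sum>k=1..N. q k) = 1 \<Longrightarrow> EE q N T (\<lambda>_. c) = c"
  using EE_cmult[of q N T c "\<lambda>_. 1"] EE_one[of q N T] by simp

lemma EE_nonneg: "(\<And>k. k \<in> {1..N} \<Longrightarrow> q k \<ge> 0) \<Longrightarrow> (\<And>ws. f ws \<ge> 0) \<Longrightarrow> EE q N T f \<ge> 0"
  unfolding EE_def LS_def
  by (intro sum_nonneg mult_nonneg_nonneg prod_list_nonneg) auto

locale renew =
  fixes a :: real and q :: "nat \<Rightarrow> real" and N :: nat
  assumes q_p: "\<And>k. 1 \<le> k \<Longrightarrow> k < N \<Longrightarrow> q k = pp a k"
    and q_sum: "(\<Sum>k=1..N. q k) = 1"
begin

lemma EE1[simp]: "EE q N T (\<lambda>_. 1) = 1" by (rule EE_one[OF q_sum])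
lemma EEc[simp]: "EE q N T (\<lambda>_. c) = c" by (rule EE_const[OF q_sum])

lemma sum_restrict:
  assumes "t < N" and "\<And>k. t < k \<Longrightarrow> h k = 0"
  shows "(\<Sum>k=1..N. q k * h k) = (\<Sum>k=1..t. pp a k * h k)"
proof -
  have "(\<Sum>k=1..N. q k * h k) = (\<Sum>k=1..t. q k * h k)"
    using assms by (intro sum.mono_neutral_right) auto
  also have "\<dots> = (\<Sum>k=1..t. pp a k * h k)"
    using assms by (intro sum.cong refl) (auto simp: q_p)
  finally show ?thesis .
qed

lemma e_thm: "t < N \<Longrightarrow> t \<le> T \<Longrightarrow> EE q N T (\<lambda>ws. real (Lc t ws)) = BB a t - 1"
proof (induction t arbitrary: T rule: less_induct)
  case (less t)
  show ?case
  proof (cases T)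
    case 0
    with less.prems show ?thesis by (simp add: EE_0 BB_def)
  next
    case (Suc T')
    have "EE q N T (\<lambda>ws. real (Lc t ws)) = (\<Sum>k=1..N. q k * EE q N T' (\<lambda>ws. real (Lc t (k#ws))))"
      by (simp add: Suc EE_Suc)
    also have "\<dots> = (\<Sum>k=1..t. pp a k * EE q N T' (\<lambda>ws. real (Lc t (k#ws))))"
      using less.prems by (intro sum_restrict) (auto simp: EE_const q_sum)
    also have "\<dots> = (\<Sum>k=1..t. pp a k * BB a (t-k))"
    proof (intro sum.cong refl)
      fix k assume k: "k \<in> {1..t}"
      have "EE q N T' (\<lambda>ws. real (Lc t (k#ws))) = EE q N T' (\<lambda>ws. 1 + real (Lc (t-k) ws))"
        using k by simp
      also have "\<dots> = 1 + (BB a (t-k) - 1)"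
      proof -
        have "t - k < t" "t - k < N" "t - k \<le> T'" using k less.prems Suc by auto
        then have "EE q N T' (\<lambda>ws. real (Lc (t-k) ws)) = BB a (t-k) - 1" using less.IH by blast
        then show ?thesis by (simp add: EE_add)
      qed
      finally show "pp a k * EE q N T' (\<lambda>ws. real (Lc t (k#ws))) = pp a k * BB a (t-k)" by simp
    qed
    also have "\<dots> = BB a t - 1"
      using renew_BB[of a a t] by (simp add: BB_0)
    finally show ?thesis .
  qed
qed

definition RR :: "nat \<Rightarrow> nat \<Rightarrow> real" where
  "RR t1 t2 = (\<Sum>l=1..t1. cc a l * (BB a (t1-l) + BB a (t2-l) - 1))"

lemma m_thm: "t1 \<le> t2 \<Longrightarrow> t2 < N \<Longrightarrow> t2 \<le> T \<Longrightarrow>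
   EE q N T (\<lambda>ws. real (Lc t1 ws) * real (Lc t2 ws)) = RR t1 t2"
proof (induction t1 arbitrary: t2 T rule: less_induct)
  case (less t1)
  show ?case
  proof (cases T)
    case 0
    with less.prems show ?thesis by (simp add: EE_0 RR_def)
  next
    case (Suc T')
    define d where "d = t2 - t1"
    define g where "g s = BB a s + BB a (s + d) - 1" for s
    have "EE q N T (\<lambda>ws. real (Lc t1 ws) * real (Lc t2 ws)) =
       (\<Sum>k=1..N. q k * EE q N T' (\<lambda>ws. real (Lc t1 (k#ws)) * real (Lc t2 (k#ws))))"
      by (simp add: Suc EE_Suc)
    also have "\<dots> = (\<Sum>k=1..t1. pp a k * EE q N T' (\<lambda>ws. real (Lc t1 (k#ws)) * real (Lc t2 (k#ws))))"
      using less.prems by (intro sum_restrict) (auto simp: EE_const q_sum)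
    also have "\<dots> = (\<Sum>k=1..t1. pp a k * (g (t1-k) + (\<Sum>l=1..t1-k. cc a l * g (t1-k-l))))"
    proof (intro sum.cong refl)
      fix k assume k: "k \<in> {1..t1}"
      have "EE q N T' (\<lambda>ws. real (Lc t1 (k#ws)) * real (Lc t2 (k#ws)))
          = EE q N T' (\<lambda>ws. 1 + real (Lc (t1-k) ws) + real (Lc (t2-k) ws) + real (Lc (t1-k) ws) * real (Lc (t2-k) ws))"
        using k less.prems by (simp add: algebra_simps)
      also have "\<dots> = 1 + (BB a (t1-k) - 1) + (BB a (t2-k) - 1) + RR (t1-k) (t2-k)"
      proof -
        have h: "t1 - k < t1" "t1 - k \<le> t2 - k" "t2 - k < N" "t2 - k \<le> T'" "t1 - k < N" "t1 - k \<le> T'"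
          using k less.prems Suc by auto
        then have "EE q N T' (\<lambda>ws. real (Lc (t1-k) ws) * real (Lc (t2-k) ws)) = RR (t1-k) (t2-k)"
          using less.IH by blast
        moreover have "EE q N T' (\<lambda>ws. real (Lc (t1-k) ws)) = BB a (t1-k) - 1" using h e_thm by blast
        moreover have "EE q N T' (\<lambda>ws. real (Lc (t2-k) ws)) = BB a (t2-k) - 1" using h e_thm by blast
        ultimately show ?thesis by (simp add: EE_add)
      qed
      also have "\<dots> = g (t1-k) + (\<Sum>l=1..t1-k. cc a l * g (t1-k-l))"
        unfolding RR_def g_def using k less.prems
        by (auto simp: d_def intro!: sum.cong)
      finally show "pp a k * EE q N T' (\<lambda>ws. real (Lc t1 (k#ws)) * real (Lc t2 (k#ws))) =
          pp a k * (g (t1-k) + (\<Sum>l=1..t1-k. cc a l * g (t1-k-l)))" by simp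
    qed
    also have "\<dots> = (\<Sum>l=1..t1. cc a l * g (t1-l))" by (rule renew_gen)
    also have "\<dots> = RR t1 t2"
      unfolding RR_def g_def using less.prems by (auto simp: d_def intro!: sum.cong)
    finally show ?thesis .
  qed
qed

lemma var_pos:
  assumes "t < N" "T \<ge> 1" "\<And>k. k \<in> {1..N} \<Longrightarrow> q k \<ge> 0"
  shows "EE q N T (\<lambda>ws. (real (Lc t ws) - c)^2) \<ge> q N * c^2"
proof -
  obtain T' where T: "T = Suc T'" using assms by (cases T) auto
  have N1: "N \<ge> 1" using assms by simp
  have "EE q N T (\<lambda>ws. (real (Lc t ws) - c)^2) = (\<Sum>k=1..N. q k * EE q N T' (\<lambda>ws. (real (Lc t (k#ws)) - c)^2))"
    by (simp add: T EE_Suc)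
  also have "\<dots> \<ge> q N * EE q N T' (\<lambda>ws. (real (Lc t (N#ws)) - c)^2)"
    using N1 assms(3) by (intro member_le_sum[where i=N, where f="\<lambda>k. q k * EE q N T' (\<lambda>ws. (real (Lc t (k#ws)) - c)^2)"]
       mult_nonneg_nonneg EE_nonneg) auto
  moreover have "EE q N T' (\<lambda>ws. c^2) = c^2" by (rule EE_const[OF q_sum])
  ultimately show ?thesis using assms(1) by simp
qed

end

lemma BB_poch: "BB b t = pochhammer (b+1) t / fact t"
  unfolding BB_def gbinomial_pochhammer' by (simp add: algebra_simps)

lemma aux_field: fixes n z P F u :: real
  assumes "n \<noteq> 0" "z + n \<noteq> 0" "F \<noteq> 0" "u \<noteq> 0"
  shows "n / (z + n) * (1 / (F * (n * u) / (P * (z + n)))) = P / (F * u)"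
proof -
  have "n / (z + n) * (1 / (F * (n * u) / (P * (z + n)))) = (n * (P * (z+n))) / ((z+n) * (F * (n * u)))"
    by simp
  also have "\<dots> = P / (F * u)" using assms by (simp add: mult_ac)
  finally show ?thesis .
qed

lemma BB_asym:
  assumes b: "b > -1"
  shows "(\<lambda>n. BB b n / real n powr b) \<longlonglongrightarrow> 1 / Gamma (b+1)"
proof -
  define z where "z = b + 1"
  have z: "z > 0" using b by (simp add: z_def)
  have GS: "Gamma_series z \<longlonglongrightarrow> Gamma z"
    by (rule Gamma_series_LIMSEQ)
  have Gz: "Gamma z \<noteq> 0" using z by (metis Gamma_real_pos less_irrefl)
  have lim: "(\<lambda>n. (real n / (z + real n)) * (1 / Gamma_series z n)) \<longlonglongrightarrow> 1 * (1 / Gamma z)"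
    by (intro tendsto_mult tendsto_divide tendsto_const GS Gz) real_asymp
  have ev: "eventually (\<lambda>n. (real n / (z + real n)) * (1 / Gamma_series z n) = BB b n / real n powr b) sequentially"
    using eventually_ge_at_top[of 1]
  proof eventually_elim
    case (elim n)
    have pz: "pochhammer z n > 0" using z by (intro pochhammer_pos)
    have npos: "real n > 0" using elim by simp
    have GSn: "Gamma_series z n = fact n * (real n powr z) / (pochhammer z n * (z + real n))"
      unfolding Gamma_series_def using npos by (simp add: powr_def pochhammer_Suc mult_ac)
    have r: "BB b n / real n powr b = pochhammer z n / (fact n * real n powr b)" by (simp add: BB_poch z_def)
    have e: "real n powr z = real n * real n powr b"
      using npos by (simp add: z_def powr_add add.commute)
    have pb: "real n powr b > 0" using npos by simp
    have zn: "z + real n > 0" using z by simp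
    have fn: "fact n > (0::real)" by simp
    have "real n / (z + real n) * (1 / (fact n * (real n * real n powr b) / (pochhammer z n * (z + real n))))
        = pochhammer z n / (fact n * real n powr b)"
      using npos pz zn pb fn by (intro aux_field) auto
    then show ?case unfolding r GSn e .
  qed
  show ?thesis using Lim_transform_eventually[OF lim ev] by (simp add: z_def)
qed

lemma BB_to0:
  assumes "b > -1" "b < 0"
  shows "(\<lambda>n. BB b n) \<longlonglongrightarrow> 0"
proof -
  have "(\<lambda>n. (BB b n / real n powr b) * real n powr b) \<longlonglongrightarrow> (1 / Gamma (b+1)) * 0"
    by (intro tendsto_mult BB_asym assms tendsto_neg_powr filterlim_real_sequentially)
  moreover have "eventually (\<lambda>n. (BB b n / real n powr b) * real n powr b = BB b n) sequentially"
    using eventually_ge_at_top[of 1] by eventually_elim simp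
  ultimately show ?thesis using Lim_transform_eventually by fastforce
qed

lemma pp_partial: "(\<Sum>k=1..n. pp a k) = 1 - BB (-a) n"
  using renew_BB[of a 0 n] by (simp add: BB_0)

lemma Lc_take: "sum_list (take (Lc t ws) ws) \<le> t"
proof (induction ws arbitrary: t)
  case Nil then show ?case by simp
next
  case (Cons k ws)
  have "sum_list (take (Lc (t-k) ws) ws) \<le> t - k" by (rule Cons.IH)
  then show ?case by auto
qed

lemma Lc_len: "Lc t ws \<le> length ws"
  by (induction ws arbitrary: t) auto

lemma Lc_max: "n \<le> length ws \<Longrightarrow> sum_list (take n ws) \<le> t \<Longrightarrow> n \<le> Lc t ws"
proof (induction ws arbitrary: t n)
  case Nil then show ?case by simp
next
  case (Cons k ws)
  show ?case
  proof (cases n)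
    case 0 then show ?thesis by simp
  next
    case (Suc m)
    then have "k + sum_list (take m ws) \<le> t" "m \<le> length ws" using Cons.prems by auto
    then have "m \<le> Lc (t-k) ws" by (intro Cons.IH) auto
    then show ?thesis using Suc \<open>k + sum_list (take m ws) \<le> t\<close> by auto
  qed
qed

lemma Max_char:
  fixes s :: "nat \<Rightarrow> nat"
  assumes mono: "\<And>n. s n \<le> s (Suc n)" and s0: "s 0 = 0"
  shows "Max {n. s n \<le> t} = c \<longleftrightarrow> ((\<forall>n. s n \<le> t) \<and> c = Max (UNIV::nat set)) \<or> (s c \<le> t \<and> \<not> s (Suc c) \<le> t)"
proof (cases "\<forall>n. s n \<le> t")
  case True
  then show ?thesis by auto
next
  case False
  then obtain n0 where n0: "s n0 > t" by (auto simp: not_le)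
  have monoS: "m \<le> n \<Longrightarrow> s m \<le> s n" for m n using mono by (rule lift_Suc_mono_le)
  have sub: "{n. s n \<le> t} \<subseteq> {..<n0}"
  proof
    fix n assume "n \<in> {n. s n \<le> t}"
    then show "n \<in> {..<n0}" using n0 monoS[of n0 n] by (cases "n0 \<le> n") auto
  qed
  then have fin: "finite {n. s n \<le> t}" by (rule finite_subset) simp
  have ne: "{n. s n \<le> t} \<noteq> {}" using s0 by (metis (mono_tags) empty_Collect_eq zero_le)
  show ?thesis
  proof
    assume "Max {n. s n \<le> t} = c"
    then have c1: "s c \<le> t" and c2: "\<forall>y. s y \<le> t \<longrightarrow> y \<le> c"
      using Max_in[OF fin ne] Max_ge[OF fin] by auto
    then show "((\<forall>n. s n \<le> t) \<and> c = Max (UNIV::nat set)) \<or> (s c \<le> t \<and> \<not> s (Suc c) \<le> t)"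
      by (metis Suc_n_not_le_n)
  next
    assume "((\<forall>n. s n \<le> t) \<and> c = Max (UNIV::nat set)) \<or> (s c \<le> t \<and> \<not> s (Suc c) \<le> t)"
    then have c1: "s c \<le> t" and c2: "\<not> s (Suc c) \<le> t" using False by auto
    have "\<forall>y\<in>{n. s n \<le> t}. y \<le> c"
    proof
      fix y assume "y \<in> {n. s n \<le> t}"
      then show "y \<le> c" using c2 monoS[of "Suc c" y] by (cases "Suc c \<le> y") auto
    qed
    then show "Max {n. s n \<le> t} = c" using c1 fin by (intro Max_eqI) auto
  qed
qed

lemma prod_list_idx0: "prod_list (map f ws) = (\<Prod>i<length ws. f (ws!i))"
  by (induction ws) (simp_all add: prod.lessThan_Suc_shift del: prod.lessThan_Suc)

lemma prod_list_idx: "prod_list (map f ws) = (\<Prod>j\<in>{1..length ws}. f (ws!(j-1)))"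
  unfolding prod_list_idx0 by (simp add: prod.atLeast1_atMost_eq)

lemma pointwise:
  fixes z :: "nat \<Rightarrow> nat"
  assumes pos: "\<forall>j\<ge>1. z j \<ge> 1" and tT: "t \<le> T" and tN: "t < N"
  shows "Max {n. (\<Sum>j=1..n. z j) \<le> t} = Lc t (map (\<lambda>i. min (z i) N) [1..<T+1])"
proof -
  define ws where "ws = map (\<lambda>i. min (z i) N) [1..<T+1]"
  have len: "length ws = T" by (simp add: ws_def)
  have tk: "sum_list (take n ws) = (\<Sum>j=1..n. min (z j) N)" if "n \<le> T" for n
  proof -
    have "take n [1..<T+1] = [1..<1+n]" using that by (intro take_upt) simp
    then have "take n ws = map (\<lambda>i. min (z i) N) [1..<1+n]" by (simp only: ws_def take_map)
    moreover have "sum_list (map (\<lambda>i. min (z i) N) [1..<1+n]) = (\<Sum>j\<in>set [1..<1+n]. min (z j) N)"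
      by (rule interv_sum_list_conv_sum_set_nat)
    moreover have "set [1..<1+n] = {1..n}" by auto
    ultimately show ?thesis by simp
  qed
  have ge: "n \<le> (\<Sum>j=1..n. z j)" for n
  proof -
    have "(\<Sum>j=1..n. (1::nat)) \<le> (\<Sum>j=1..n. z j)" using pos by (intro sum_mono) auto
    then show ?thesis by simp
  qed
  have fin: "finite {n. (\<Sum>j=1..n. z j) \<le> t}"
    by (rule finite_subset[of _ "{..t}"]) (auto intro: order_trans[OF ge])
  show ?thesis unfolding ws_def[symmetric]
  proof (rule Max_eqI[OF fin])
    fix y assume "y \<in> {n. (\<Sum>j=1..n. z j) \<le> t}"
    then have y: "(\<Sum>j=1..y. z j) \<le> t" by simp
    then have yT: "y \<le> T" using ge[of y] tT by linarith
    have "(\<Sum>j=1..y. min (z j) N) \<le> (\<Sum>j=1..y. z j)" by (intro sum_mono) simp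
    then show "y \<le> Lc t ws" using y yT by (intro Lc_max) (auto simp: len tk)
  next
    define m where "m = Lc t ws"
    have mT: "m \<le> T" using Lc_len[of t ws] by (simp add: m_def len)
    have s: "(\<Sum>j=1..m. min (z j) N) \<le> t" using Lc_take[of t ws] tk[OF mT] by (simp add: m_def)
    have "(\<Sum>j=1..m. min (z j) N) = (\<Sum>j=1..m. z j)"
    proof (intro sum.cong refl)
      fix j assume j: "j \<in> {1..m}"
      have "min (z j) N \<le> (\<Sum>j=1..m. min (z j) N)" using j by (intro member_le_sum) auto
      then have "min (z j) N < N" using s tN by linarith
      then show "min (z j) N = z j" by simp
    qed
    then show "m \<in> {n. (\<Sum>j=1..n. z j) \<le> t}" using s by simp
  qed
qed

locale setting = prob_space M for M :: "'a measure" +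
  fixes Z :: "nat \<Rightarrow> 'a \<Rightarrow> nat" and \<alpha> :: real
  assumes a0: "0 < \<alpha>" and a1: "\<alpha> < 1"
    and indep: "indep_vars (\<lambda>_. count_space UNIV) Z {1..}"
    and dist: "\<And>i k. i \<ge> 1 \<Longrightarrow> k \<ge> 1 \<Longrightarrow> measure M {\<omega> \<in> space M. Z i \<omega> = k} = (-1) ^ (k - 1) * (\<alpha> gchoose k)"
begin

lemma Zmeas: "i \<ge> 1 \<Longrightarrow> Z i \<in> M \<rightarrow>\<^sub>M count_space UNIV"
  using indep unfolding indep_vars_def2 by auto

lemma Zset: "i \<ge> 1 \<Longrightarrow> {\<omega>\<in>space M. P (Z i \<omega>)} \<in> sets M"
proof -
  assume "i \<ge> 1"
  from measurable_sets[OF Zmeas[OF this], of "{x. P x}"]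
  show ?thesis by (simp add: vimage_def Int_def conj_commute)
qed

lemma prob_lt: "i \<ge> 1 \<Longrightarrow> prob {\<omega>\<in>space M. Z i \<omega> < m} = (\<Sum>k<m. prob {\<omega>\<in>space M. Z i \<omega> = k})"
proof -
  assume i: "i \<ge> 1"
  have "{\<omega>\<in>space M. Z i \<omega> < m} = (\<Union>k\<in>{..<m}. {\<omega>\<in>space M. Z i \<omega> = k})" by auto
  moreover have "prob (\<Union>k\<in>{..<m}. {\<omega>\<in>space M. Z i \<omega> = k}) = (\<Sum>k<m. prob {\<omega>\<in>space M. Z i \<omega> = k})"
    using i by (intro finite_measure_finite_Union) (auto simp: disjoint_family_on_def intro: Zset)
  ultimately show ?thesis by simp
qed

lemma Zk: "i \<ge> 1 \<Longrightarrow> k \<ge> 1 \<Longrightarrow> prob {\<omega>\<in>space M. Z i \<omega> = k} = pp \<alpha> k"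
  using dist by (simp add: pp_def)

lemma prob_lt': "i \<ge> 1 \<Longrightarrow> prob {\<omega>\<in>space M. Z i \<omega> < Suc n} = prob {\<omega>\<in>space M. Z i \<omega> = 0} + (1 - BB (-\<alpha>) n)"
proof -
  assume i: "i \<ge> 1"
  have "(\<Sum>k<Suc n. prob {\<omega>\<in>space M. Z i \<omega> = k}) = prob {\<omega>\<in>space M. Z i \<omega> = 0} + (\<Sum>k=1..n. prob {\<omega>\<in>space M. Z i \<omega> = k})"
    by (simp add: lessThan_Suc_atMost atMost_atLeast0 sum.atLeast_Suc_atMost)
  also have "(\<Sum>k=1..n. prob {\<omega>\<in>space M. Z i \<omega> = k}) = (\<Sum>k=1..n. pp \<alpha> k)"
    using i by (intro sum.cong refl Zk) auto
  finally show ?thesis using prob_lt[OF i] pp_partial by simp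
qed

lemma Z0: "i \<ge> 1 \<Longrightarrow> prob {\<omega>\<in>space M. Z i \<omega> = 0} = 0"
proof -
  assume i: "i \<ge> 1"
  have le: "prob {\<omega>\<in>space M. Z i \<omega> = 0} \<le> BB (-\<alpha>) n" for n
    using prob_lt'[OF i, of n] prob_le_1[of "{\<omega>\<in>space M. Z i \<omega> < Suc n}"] by linarith
  have "(\<lambda>n. BB (-\<alpha>) n) \<longlonglongrightarrow> 0" using a0 a1 by (intro BB_to0) auto
  then have "prob {\<omega>\<in>space M. Z i \<omega> = 0} \<le> 0"
    using le by (intro LIMSEQ_le_const[where a="prob {\<omega>\<in>space M. Z i \<omega> = 0}"]) auto
  then show ?thesis using measure_nonneg[of M] by (simp add: order_antisym)
qed

lemma AE_pos: "AE \<omega> in M. \<forall>j\<ge>1. Z j \<omega> \<ge> 1"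
proof -
  have "AE \<omega> in M. 1 \<le> j \<longrightarrow> Z j \<omega> \<ge> 1" for j
  proof (cases "j \<ge> 1")
    case True
    have "{\<omega>\<in>space M. Z j \<omega> = 0} \<in> null_sets M"
      using Z0[OF True] Zset[OF True] by (simp add: null_sets_def emeasure_eq_measure)
    then show ?thesis by (rule AE_I') auto
  qed simp
  then show ?thesis by (subst AE_all_countable) simp
qed

end

context setting begin

definition qq :: "nat \<Rightarrow> nat \<Rightarrow> real" where
  "qq N k = (if k < N then pp \<alpha> k else BB (-\<alpha>) (N-1))"

definition q0 :: "nat \<Rightarrow> nat \<Rightarrow> real" where
  "q0 N k = (if k = 0 then 0 else qq N k)"

lemma qq_sum: "N \<ge> 1 \<Longrightarrow> (\<Sum>k=1..N. qq N k) = 1"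
proof -
  assume "N \<ge> 1"
  then obtain n where N: "N = Suc n" by (cases N) auto
  have "(\<Sum>k=1..N. qq N k) = (\<Sum>k=1..n. qq N k) + qq N N" by (simp add: N)
  also have "(\<Sum>k=1..n. qq N k) = (\<Sum>k=1..n. pp \<alpha> k)" by (intro sum.cong refl) (auto simp: qq_def N)
  finally show ?thesis using pp_partial[of \<alpha> n] by (simp add: qq_def N)
qed

lemma renew_qq: "N \<ge> 1 \<Longrightarrow> renew \<alpha> (qq N) N"
proof -
  assume N: "N \<ge> 1"
  show ?thesis
  proof
    show "\<And>k. 1 \<le> k \<Longrightarrow> k < N \<Longrightarrow> qq N k = pp \<alpha> k" by (simp add: qq_def)
    show "(\<Sum>k=1..N. qq N k) = 1" using N by (rule qq_sum)
  qed
qed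

lemma Wprob:
  assumes i: "i \<ge> 1" and N: "N \<ge> 1" and k: "k \<le> N"
  shows "prob {\<omega>\<in>space M. min (Z i \<omega>) N = k} = q0 N k"
proof -
  consider "k = 0" | "1 \<le> k" "k < N" | "k = N" using k by linarith
  then show ?thesis
  proof cases
    case 1
    then have "{\<omega>\<in>space M. min (Z i \<omega>) N = k} = {\<omega>\<in>space M. Z i \<omega> = 0}" using N by auto
    then show ?thesis using Z0[OF i] 1 by (simp add: q0_def)
  next
    case 2
    then have "{\<omega>\<in>space M. min (Z i \<omega>) N = k} = {\<omega>\<in>space M. Z i \<omega> = k}" by auto
    then show ?thesis using Zk[OF i, of k] 2 by (simp add: q0_def qq_def)
  next
    case 3
    obtain n where Nn: "N = Suc n" using N by (cases N) auto
    have "{\<omega>\<in>space M. min (Z i \<omega>) N = k} = space M - {\<omega>\<in>space M. Z i \<omega> < Suc n}" using 3 Nn by auto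
    then have "prob {\<omega>\<in>space M. min (Z i \<omega>) N = k} = 1 - prob {\<omega>\<in>space M. Z i \<omega> < Suc n}"
      using prob_compl Zset[OF i] by simp
    then show ?thesis using prob_lt'[OF i, of n] Z0[OF i] 3 Nn by (simp add: q0_def qq_def)
  qed
qed

definition ZW :: "nat \<Rightarrow> nat \<Rightarrow> 'a \<Rightarrow> nat list" where
  "ZW N T \<omega> = map (\<lambda>i. min (Z i \<omega>) N) [1..<T+1]"

lemma ZW_eq: "length ws = T \<Longrightarrow> (ZW N T \<omega> = ws) \<longleftrightarrow> (\<forall>j\<in>{1..T}. min (Z j \<omega>) N = ws!(j-1))"
proof -
  assume len: "length ws = T"
  have "(ZW N T \<omega> = ws) \<longleftrightarrow> (\<forall>i<T. min (Z (Suc i) \<omega>) N = ws!i)"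
    using len by (auto simp: ZW_def list_eq_iff_nth_eq nth_upt simp del: upt_Suc)
  also have "\<dots> \<longleftrightarrow> (\<forall>j\<in>{1..T}. min (Z j \<omega>) N = ws!(j-1))"
  proof
    assume h: "\<forall>i<T. min (Z (Suc i) \<omega>) N = ws!i"
    show "\<forall>j\<in>{1..T}. min (Z j \<omega>) N = ws!(j-1)"
    proof
      fix j assume "j \<in> {1..T}"
      then show "min (Z j \<omega>) N = ws!(j-1)" using h[rule_format, of "j-1"] by (cases j) auto
    qed
  next
    assume h: "\<forall>j\<in>{1..T}. min (Z j \<omega>) N = ws!(j-1)"
    then show "\<forall>i<T. min (Z (Suc i) \<omega>) N = ws!i" by auto
  qed
  finally show ?thesis .
qed

lemma ZW_len: "length (ZW N T \<omega>) = T" by (simp add: ZW_def)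

lemma ZW_sets: "{\<omega>\<in>space M. ZW N T \<omega> = ws} \<in> sets M"
proof (cases "length ws = T")
  case True
  show ?thesis
  proof (cases "T = 0")
    case True
    then have "{\<omega>\<in>space M. ZW N T \<omega> = ws} = space M" using \<open>length ws = T\<close> by (auto simp: ZW_def)
    then show ?thesis by simp
  next
    case False
    have "{\<omega>\<in>space M. ZW N T \<omega> = ws} = {\<omega>\<in>space M. \<forall>j\<in>{1..T}. min (Z j \<omega>) N = ws!(j-1)}"
      using ZW_eq[OF True] by auto
    also have "\<dots> \<in> sets M"
      using False by (intro sets.sets_Collect_finite_All' Zset) auto
    finally show ?thesis .
  qed
next
  case False
  then have e: "{\<omega>\<in>space M. ZW N T \<omega> = ws} = {}" by (auto simp: ZW_len)
  show ?thesis unfolding e by simp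
qed

lemma ZW_meas: "ZW N T \<in> M \<rightarrow>\<^sub>M count_space UNIV"
proof -
  have "ZW N T -` {a} \<inter> space M \<in> sets M" for a
  proof -
    have "ZW N T -` {a} \<inter> space M = {\<omega>\<in>space M. ZW N T \<omega> = a}" by auto
    then show ?thesis using ZW_sets by simp
  qed
  then show ?thesis by (subst measurable_count_space_eq2_countable) auto
qed

lemma ZW_prob:
  assumes N: "N \<ge> 1" and ws: "length ws = T" "set ws \<subseteq> {0..N}"
  shows "prob {\<omega>\<in>space M. ZW N T \<omega> = ws} = prod_list (map (q0 N) ws)"
proof (cases "T = 0")
  case True
  then have "{\<omega>\<in>space M. ZW N T \<omega> = ws} = space M" using ws by (auto simp: ZW_def)
  then show ?thesis using True ws by (simp add: prob_space)
next
  case False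
  define A where "A j = {\<omega>\<in>space M. min (Z j \<omega>) N = ws!(j-1)}" for j
  have ie: "indep_events A {1..}"
    unfolding A_def by (rule indep_eventsI_indep_vars[OF indep]) auto
  have one: "1 \<in> {1..T}" using False by simp
  have "{\<omega>\<in>space M. ZW N T \<omega> = ws} = (\<Inter>j\<in>{1..T}. A j)"
    using ZW_eq[OF ws(1)] one by (auto simp: A_def)
  moreover have "prob (\<Inter>j\<in>{1..T}. A j) = (\<Prod>j\<in>{1..T}. prob (A j))"
  proof -
    have "\<forall>J\<subseteq>{1..}. J \<noteq> {} \<longrightarrow> finite J \<longrightarrow> prob (\<Inter>j\<in>J. A j) = (\<Prod>j\<in>J. prob (A j))"
      using ie unfolding indep_events_def by blast
    moreover have "{1..T} \<subseteq> {1..}" "{1..T} \<noteq> {}" "finite {1..T}" using one by auto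
    ultimately show ?thesis by blast
  qed
  ultimately have "prob {\<omega>\<in>space M. ZW N T \<omega> = ws} = (\<Prod>j\<in>{1..T}. prob (A j))" by simp
  also have "\<dots> = (\<Prod>j\<in>{1..T}. q0 N (ws!(j-1)))"
  proof (intro prod.cong refl)
    fix j assume j: "j \<in> {1..T}"
    then have "ws!(j-1) \<in> set ws" using ws by (intro nth_mem) auto
    then have "ws!(j-1) \<le> N" using ws by auto
    then show "prob (A j) = q0 N (ws!(j-1))" unfolding A_def using j N by (intro Wprob) auto
  qed
  also have "\<dots> = prod_list (map (q0 N) ws)" by (simp add: prod_list_idx ws)
  finally show ?thesis .
qed

lemma bridge:
  assumes N: "N \<ge> 1"
  shows "expectation (\<lambda>\<omega>. f (ZW N T \<omega>)) = EE (qq N) N T f"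
proof -
  define LS0 where "LS0 = {ws. set ws \<subseteq> {0..N} \<and> length ws = T}"
  have fin0: "finite LS0" unfolding LS0_def by (rule finite_lists_length_eq) simp
  have inLS0: "ZW N T \<omega> \<in> LS0" for \<omega> by (auto simp: LS0_def ZW_def)
  have rep: "f (ZW N T \<omega>) = (\<Sum>ws\<in>LS0. f ws * indicator {\<omega>\<in>space M. ZW N T \<omega> = ws} \<omega>)"
    if "\<omega> \<in> space M" for \<omega>
  proof -
    have "(\<Sum>ws\<in>LS0. f ws * indicator {\<omega>\<in>space M. ZW N T \<omega> = ws} \<omega>) = (\<Sum>ws\<in>LS0. if ZW N T \<omega> = ws then f ws else 0)"
      using that by (intro sum.cong refl) (auto simp: indicator_def)
    also have "\<dots> = f (ZW N T \<omega>)" using fin0 inLS0[of \<omega>] by (simp add: sum.delta)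
    finally show ?thesis by simp
  qed
  have "expectation (\<lambda>\<omega>. f (ZW N T \<omega>)) = expectation (\<lambda>\<omega>. \<Sum>ws\<in>LS0. f ws * indicator {\<omega>\<in>space M. ZW N T \<omega> = ws} \<omega>)"
    using rep by (intro Bochner_Integration.integral_cong) auto
  also have "\<dots> = (\<Sum>ws\<in>LS0. f ws * prob {\<omega>\<in>space M. ZW N T \<omega> = ws})"
    using ZW_sets by (subst Bochner_Integration.integral_sum) (auto intro!: sum.cong simp: emeasure_eq_measure)
  also have "\<dots> = (\<Sum>ws\<in>LS0. f ws * prod_list (map (q0 N) ws))"
    using N by (intro sum.cong refl) (auto simp: LS0_def ZW_prob)
  also have "\<dots> = (\<Sum>ws\<in>LS N T. f ws * prod_list (map (q0 N) ws))"
  proof (rule sum.mono_neutral_right[OF fin0])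
    show "LS N T \<subseteq> LS0" by (auto simp: LS_def LS0_def)
    show "\<forall>ws\<in>LS0 - LS N T. f ws * prod_list (map (q0 N) ws) = 0"
    proof
      fix ws assume "ws \<in> LS0 - LS N T"
      then have "0 \<in> set ws" by (auto simp: LS0_def LS_def) (metis atLeastAtMost_iff le_0_eq not_less_eq_eq subsetD, force)
      then have "prod_list (map (q0 N) ws) = 0" by (auto simp: prod_list_zero_iff q0_def intro!: bexI[of _ 0])
      then show "f ws * prod_list (map (q0 N) ws) = 0" by simp
    qed
  qed
  also have "\<dots> = EE (qq N) N T f"
    unfolding EE_def
  proof (intro sum.cong refl)
    fix ws assume "ws \<in> LS N T"
    then have "map (q0 N) ws = map (qq N) ws" by (auto simp: LS_def q0_def)
    then show "f ws * prod_list (map (q0 N) ws) = f ws * prod_list (map (qq N) ws)" by metis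
  qed
  finally show ?thesis .
qed

end

context setting begin

lemma sig_real_meas: "(\<lambda>\<omega>. real (sigma_sum Z n \<omega>)) \<in> borel_measurable M"
proof -
  have "(\<lambda>\<omega>. \<Sum>j\<in>{1..n}. real (Z j \<omega>)) \<in> borel_measurable M"
  proof (intro borel_measurable_sum)
    fix j assume "j \<in> {1..n}"
    then have "Z j \<in> M \<rightarrow>\<^sub>M count_space UNIV" by (intro Zmeas) auto
    moreover have "(real :: nat \<Rightarrow> real) \<in> count_space UNIV \<rightarrow>\<^sub>M borel" by simp
    ultimately show "(\<lambda>\<omega>. real (Z j \<omega>)) \<in> borel_measurable M" by (rule measurable_compose)
  qed
  then show ?thesis by (simp add: sigma_sum_def)
qed

lemma sig_set: "{\<omega>\<in>space M. sigma_sum Z n \<omega> \<le> t} \<in> sets M"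
proof -
  have "{\<omega>\<in>space M. real (sigma_sum Z n \<omega>) \<le> real t} \<in> sets M"
    using sig_real_meas[of n] by measurable
  then show ?thesis by simp
qed

lemma sig_mono: "sigma_sum Z n \<omega> \<le> sigma_sum Z (Suc n) \<omega>"
  by (simp add: sigma_sum_def)

lemma L_meas: "L_count Z t \<in> M \<rightarrow>\<^sub>M count_space UNIV"
proof -
  have "L_count Z t -` {c} \<inter> space M \<in> sets M" for c
  proof -
    have "L_count Z t -` {c} \<inter> space M = {\<omega>\<in>space M. ((\<forall>n. sigma_sum Z n \<omega> \<le> t) \<and> c = Max (UNIV::nat set))
        \<or> (sigma_sum Z c \<omega> \<le> t \<and> \<not> sigma_sum Z (Suc c) \<omega> \<le> t)}"
      unfolding L_count_def using Max_char[of "\<lambda>n. sigma_sum Z n _", OF sig_mono] by (auto simp: sigma_sum_def)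
    also have "\<dots> \<in> sets M"
      by (intro sets.sets_Collect sig_set) 
    finally show ?thesis .
  qed
  then show ?thesis by (subst measurable_count_space_eq2_countable) auto
qed

lemma L_AE: "t \<le> T \<Longrightarrow> t < N \<Longrightarrow> AE \<omega> in M. L_count Z t \<omega> = Lc t (ZW N T \<omega>)"
  using AE_pos
proof eventually_elim
  case (elim \<omega>)
  assume "t \<le> T" "t < N"
  then show ?case unfolding L_count_def sigma_sum_def ZW_def using elim by (intro pointwise) auto
qed

lemma transfer:
  assumes "t1 \<le> T" "t2 \<le> T" "T < N"
  shows "expectation (\<lambda>\<omega>. F (L_count Z t1 \<omega>) (L_count Z t2 \<omega>)) = EE (qq N) N T (\<lambda>ws. F (Lc t1 ws) (Lc t2 ws))"
proof -
  have pair: "(\<lambda>\<omega>. (L_count Z t1 \<omega>, L_count Z t2 \<omega>)) \<in> M \<rightarrow>\<^sub>M count_space UNIV"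
  proof -
    have "(\<lambda>\<omega>. (L_count Z t1 \<omega>, L_count Z t2 \<omega>)) -` {ab} \<inter> space M \<in> sets M" for ab
    proof -
      obtain a b where ab: "ab = (a,b)" by (cases ab)
      have "(\<lambda>\<omega>. (L_count Z t1 \<omega>, L_count Z t2 \<omega>)) -` {ab} \<inter> space M
          = (L_count Z t1 -` {a} \<inter> space M) \<inter> (L_count Z t2 -` {b} \<inter> space M)" by (auto simp: ab)
      then show ?thesis using measurable_sets[OF L_meas[of t1], of "{a}"] measurable_sets[OF L_meas[of t2], of "{b}"]
        by auto
    qed
    then show ?thesis by (subst measurable_count_space_eq2_countable) auto
  qed
  have "(\<lambda>(x,y). F x y) \<in> count_space UNIV \<rightarrow>\<^sub>M borel" by simp
  from measurable_compose[OF pair this]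
  have m1: "(\<lambda>\<omega>. F (L_count Z t1 \<omega>) (L_count Z t2 \<omega>)) \<in> borel_measurable M" by simp
  have "(\<lambda>ws. F (Lc t1 ws) (Lc t2 ws)) \<in> count_space UNIV \<rightarrow>\<^sub>M borel" by simp
  from measurable_compose[OF ZW_meas this]
  have m2: "(\<lambda>\<omega>. F (Lc t1 (ZW N T \<omega>)) (Lc t2 (ZW N T \<omega>))) \<in> borel_measurable M" by simp
  have ae: "AE \<omega> in M. F (L_count Z t1 \<omega>) (L_count Z t2 \<omega>) = F (Lc t1 (ZW N T \<omega>)) (Lc t2 (ZW N T \<omega>))"
  proof -
    have a1: "AE \<omega> in M. L_count Z t1 \<omega> = Lc t1 (ZW N T \<omega>)" using assms by (intro L_AE) auto
    have a2: "AE \<omega> in M. L_count Z t2 \<omega> = Lc t2 (ZW N T \<omega>)" using assms by (intro L_AE) auto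
    from a1 a2 show ?thesis by eventually_elim simp
  qed
  have "expectation (\<lambda>\<omega>. F (L_count Z t1 \<omega>) (L_count Z t2 \<omega>)) = expectation (\<lambda>\<omega>. F (Lc t1 (ZW N T \<omega>)) (Lc t2 (ZW N T \<omega>)))"
    by (rule integral_cong_AE[OF m1 m2 ae])
  also have "\<dots> = EE (qq N) N T (\<lambda>ws. F (Lc t1 ws) (Lc t2 ws))"
    using assms by (intro bridge) auto
  finally show ?thesis .
qed

end

lemma BB_pos: "b > -1 \<Longrightarrow> BB b t > 0"
  unfolding BB_poch by (intro divide_pos_pos pochhammer_pos) auto

lemma cc_pos: "a > 0 \<Longrightarrow> cc a l > 0"
  unfolding cc_BB by (intro BB_pos) auto

lemma BB_gt1: "a > 0 \<Longrightarrow> t \<ge> 1 \<Longrightarrow> BB a t - 1 > 0"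
proof -
  assume a: "a > 0" and t: "t \<ge> 1"
  have "(\<Sum>l=1..t. cc a l) > 0" using t a by (intro sum_pos cc_pos) auto
  then show ?thesis using sum_cc1[of a t] by simp
qed

lemma RR_diag: "(\<Sum>l=1..t. cc a l * (BB a (t-l) + BB a (t-l) - 1)) = 2 * BB (2*a) t - 3 * BB a t + 1"
proof -
  have "(\<Sum>l=1..t. cc a l * (BB a (t-l) + BB a (t-l) - 1)) = 2 * (\<Sum>l=1..t. cc a l * BB a (t-l)) - (\<Sum>l=1..t. cc a l)"
    by (simp add: sum_subtractf sum_distrib_left algebra_simps)
  moreover have "(\<Sum>l=1..t. cc a l * BB a (t-l)) = BB (2*a) t - BB a t"
    using conv_cc_BB[of a t] by (simp add: atMost_atLeast0 sum.atLeast_Suc_atMost cc0)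
  ultimately show ?thesis using sum_cc1[of a t] by simp
qed

context renew begin
lemma EE_cov: "EE q N T (\<lambda>ws. (X ws - c1) * (Y ws - c2)) = EE q N T (\<lambda>ws. X ws * Y ws) - c2 * EE q N T X - c1 * EE q N T Y + c1 * c2"
proof -
  have "EE q N T (\<lambda>ws. (X ws - c1) * (Y ws - c2)) = EE q N T (\<lambda>ws. X ws * Y ws + ((-c2) * X ws + ((-c1) * Y ws + c1 * c2)))"
    by (rule arg_cong[where f="EE q N T"]) (auto simp: fun_eq_iff algebra_simps)
  also have "\<dots> = EE q N T (\<lambda>ws. X ws * Y ws) + ((-c2) * EE q N T X + ((-c1) * EE q N T Y + c1 * c2))"
    by (simp only: EE_add EE_cmult EEc)
  finally show ?thesis by simp
qed
end

context setting begin

lemma E1: "expectation (\<lambda>\<omega>. real (L_count Z t \<omega>)) = BB \<alpha> t - 1"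
proof -
  interpret r: renew \<alpha> "qq (t+1)" "t+1" by (rule renew_qq) simp
  have "expectation (\<lambda>\<omega>. real (L_count Z t \<omega>)) = EE (qq (t+1)) (t+1) t (\<lambda>ws. real (Lc t ws))"
    using transfer[of t t t "t+1" "\<lambda>x y. real x"] by simp
  also have "\<dots> = BB \<alpha> t - 1" by (rule r.e_thm) auto
  finally show ?thesis .
qed

lemma E12_le: "t1 \<le> t2 \<Longrightarrow> expectation (\<lambda>\<omega>. real (L_count Z t1 \<omega>) * real (L_count Z t2 \<omega>))
   = (\<Sum>l=1..t1. cc \<alpha> l * (BB \<alpha> (t1-l) + BB \<alpha> (t2-l) - 1))"
proof -
  assume le: "t1 \<le> t2"
  interpret r: renew \<alpha> "qq (t2+1)" "t2+1" by (rule renew_qq) simp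
  have "expectation (\<lambda>\<omega>. real (L_count Z t1 \<omega>) * real (L_count Z t2 \<omega>)) = EE (qq (t2+1)) (t2+1) t2 (\<lambda>ws. real (Lc t1 ws) * real (Lc t2 ws))"
    using le transfer[of t1 t2 t2 "t2+1" "\<lambda>x y. real x * real y"] by simp
  also have "\<dots> = r.RR t1 t2" using le by (intro r.m_thm) auto
  finally show ?thesis by (simp add: r.RR_def)
qed

lemma COV_le: "t1 \<le> t2 \<Longrightarrow> covariance M (\<lambda>\<omega>. real (L_count Z t1 \<omega>)) (\<lambda>\<omega>. real (L_count Z t2 \<omega>))
   = (\<Sum>l=1..t1. cc \<alpha> l * (BB \<alpha> (t1-l) + BB \<alpha> (t2-l) - 1)) - (BB \<alpha> t1 - 1) * (BB \<alpha> t2 - 1)"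
proof -
  assume le: "t1 \<le> t2"
  interpret r: renew \<alpha> "qq (t2+1)" "t2+1" by (rule renew_qq) simp
  define c1 where "c1 = BB \<alpha> t1 - 1"
  define c2 where "c2 = BB \<alpha> t2 - 1"
  have "covariance M (\<lambda>\<omega>. real (L_count Z t1 \<omega>)) (\<lambda>\<omega>. real (L_count Z t2 \<omega>))
      = expectation (\<lambda>\<omega>. (real (L_count Z t1 \<omega>) - c1) * (real (L_count Z t2 \<omega>) - c2))"
    unfolding covariance_def E1 c1_def c2_def ..
  also have "\<dots> = EE (qq (t2+1)) (t2+1) t2 (\<lambda>ws. (real (Lc t1 ws) - c1) * (real (Lc t2 ws) - c2))"
    using le transfer[of t1 t2 t2 "t2+1" "\<lambda>x y. (real x - c1) * (real y - c2)"] by simp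
  also have "\<dots> = r.RR t1 t2 - c2 * c1 - c1 * c2 + c1 * c2"
  proof -
    have h1: "EE (qq (t2+1)) (t2+1) t2 (\<lambda>ws. real (Lc t1 ws) * real (Lc t2 ws)) = r.RR t1 t2"
      using le by (intro r.m_thm) auto
    have h2: "EE (qq (t2+1)) (t2+1) t2 (\<lambda>ws. real (Lc t1 ws)) = c1" unfolding c1_def using le by (intro r.e_thm) auto
    have h3: "EE (qq (t2+1)) (t2+1) t2 (\<lambda>ws. real (Lc t2 ws)) = c2" unfolding c2_def by (intro r.e_thm) auto
    show ?thesis unfolding r.EE_cov h1 h2 h3 by simp
  qed
  finally show ?thesis by (simp add: r.RR_def c1_def c2_def)
qed

lemma VAR: "variance (\<lambda>\<omega>. real (L_count Z t \<omega>)) = 2 * BB (2*\<alpha>) t - 3 * BB \<alpha> t + 1 - (BB \<alpha> t - 1)^2"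
proof -
  have "variance (\<lambda>\<omega>. real (L_count Z t \<omega>)) = covariance M (\<lambda>\<omega>. real (L_count Z t \<omega>)) (\<lambda>\<omega>. real (L_count Z t \<omega>))"
    unfolding covariance_def by (simp add: power2_eq_square)
  also have "\<dots> = (\<Sum>l=1..t. cc \<alpha> l * (BB \<alpha> (t-l) + BB \<alpha> (t-l) - 1)) - (BB \<alpha> t - 1) * (BB \<alpha> t - 1)"
    by (rule COV_le) simp
  also have "\<dots> = 2 * BB (2*\<alpha>) t - 3 * BB \<alpha> t + 1 - (BB \<alpha> t - 1)^2"
    by (simp only: RR_diag power2_eq_square)
  finally show ?thesis .
qed

lemma pp_nonneg: "k \<ge> 1 \<Longrightarrow> pp \<alpha> k \<ge> 0"
  using Zk[of 1 k] measure_nonneg[of M] by (metis order_refl)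

lemma VAR_pos: "t \<ge> 1 \<Longrightarrow> variance (\<lambda>\<omega>. real (L_count Z t \<omega>)) > 0"
proof -
  assume t: "t \<ge> 1"
  interpret r: renew \<alpha> "qq (t+1)" "t+1" by (rule renew_qq) simp
  define c where "c = BB \<alpha> t - 1"
  have c: "c > 0" unfolding c_def using a0 t by (intro BB_gt1) auto
  have "variance (\<lambda>\<omega>. real (L_count Z t \<omega>)) = EE (qq (t+1)) (t+1) t (\<lambda>ws. (real (Lc t ws) - c)^2)"
    using transfer[of t t t "t+1" "\<lambda>x y. (real x - c)^2"] by (simp add: E1 c_def)
  also have "\<dots> \<ge> qq (t+1) (t+1) * c^2"
    using t by (intro r.var_pos) (auto simp: qq_def pp_nonneg less_imp_le[OF BB_pos] a1)
  finally have "variance (\<lambda>\<omega>. real (L_count Z t \<omega>)) \<ge> qq (t+1) (t+1) * c^2" .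
  moreover have "qq (t+1) (t+1) > 0" unfolding qq_def using a1 by (simp add: BB_pos)
  ultimately show ?thesis using c by (smt (verit) mult_pos_pos zero_less_power)
qed

end

lemma Gamma_ineq:
  fixes a :: real
  assumes a0: "0 < a" and a1: "a < 1"
  shows "Gamma (2*a+1) < 2 * Gamma (a+1)^2"
proof -
  define f where "f x = ln_Gamma (1 + 2*x) - 2 * ln_Gamma (1 + x)" for x :: real
  define f' where "f' x = 2 * Digamma (1 + 2*x) - 2 * Digamma (1 + x)" for x :: real
  have der: "DERIV f x :> f' x" if "a \<le> x" "x \<le> 1" for x
  proof -
    have x: "x > 0" using that a0 by simp
    have d1: "((\<lambda>x. ln_Gamma (1 + 2*x)) has_field_derivative Digamma (1 + 2*x) * 2) (at x)"
      using x by (auto intro!: derivative_eq_intros)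
    have d2: "((\<lambda>x. ln_Gamma (1 + x)) has_field_derivative Digamma (1 + x) * 1) (at x)"
      using x by (auto intro!: derivative_eq_intros)
    show ?thesis unfolding f_def f'_def
      using DERIV_diff[OF d1 DERIV_cmult[OF d2, of 2]] by (simp add: algebra_simps)
  qed
  obtain z where z: "a < z" "z < 1" "f 1 - f a = (1 - a) * f' z"
    using MVT2[OF a1 der] by auto
  have "Digamma (1 + z) < Digamma (1 + 2*z)" using z a0 by (intro Digamma_real_strict_mono) auto
  then have "f' z > 0" by (simp add: f'_def)
  then have lt: "f a < f 1" using z a1 by (smt (verit) mult_pos_pos)
  have G3: "Gamma (3::real) = 2" using Gamma_fact[of 2, where 'a=real] by (simp add: numeral_3_eq_3)
  have G2: "Gamma (2::real) = 1" using Gamma_fact[of 1, where 'a=real] by simp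
  have "f 1 = ln 2" unfolding f_def using G2 G3 by (simp add: ln_Gamma_real_pos)
  then have "ln (Gamma (1 + 2*a)) - 2 * ln (Gamma (1 + a)) < ln 2"
    using lt a0 unfolding f_def by (simp add: ln_Gamma_real_pos)
  moreover have "ln (2 * Gamma (a+1)^2) = ln 2 + 2 * ln (Gamma (1 + a))"
  proof -
    have "Gamma (1 + a) > 0" using a0 by (intro Gamma_real_pos) simp
    then show ?thesis by (simp add: ln_mult ln_realpow add.commute)
  qed
  ultimately have "ln (Gamma (2*a+1)) < ln (2 * Gamma (a+1)^2)" by (simp add: add.commute)
  moreover have "Gamma (a + 1) > 0" "Gamma (2*a + 1) > 0" using a0 by (auto intro!: Gamma_real_pos)
  ultimately show ?thesis by (subst (asm) ln_less_cancel_iff) auto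
qed

lemma BB_step: "m \<ge> 1 \<Longrightarrow> BB a m - BB a (m-1) = cc a m"
proof -
  assume "m \<ge> 1"
  then obtain m' where m: "m = Suc m'" by (cases m) auto
  have "BB a (Suc m') = BB a m' + cc a (Suc m')" by (metis sum_cc sum.atMost_Suc)
  then show ?thesis by (simp add: m)
qed

lemma cc_to0: "0 < a \<Longrightarrow> a < 1 \<Longrightarrow> cc a \<longlonglongrightarrow> 0"
  unfolding cc_BB by (intro BB_to0) auto

lemma shift_to0:
  assumes "0 < a" "a < 1"
  shows "(\<lambda>t. BB a (t - l) - BB a t) \<longlonglongrightarrow> 0"
proof (induction l)
  case 0 then show ?case by simp
next
  case (Suc l)
  have c: "(\<lambda>t. cc a (t - l)) \<longlonglongrightarrow> 0"
    by (rule filterlim_compose[OF cc_to0[OF assms] filterlim_minus_const_nat_at_top])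
  have lim: "(\<lambda>t. (BB a (t - l) - BB a t) - cc a (t - l)) \<longlonglongrightarrow> 0 - 0"
    by (intro tendsto_diff Suc c)
  have ev:  "eventually (\<lambda>t. (BB a (t - l) - BB a t) - cc a (t - l) = BB a (t - Suc l) - BB a t) sequentially"
    using eventually_ge_at_top[of "Suc l"]
  proof eventually_elim
    case (elim t)
    have "BB a (t - l) - BB a (t - l - 1) = cc a (t - l)" using elim by (intro BB_step) auto
    moreover have eq: "t - Suc l = t - l - 1" by simp
    ultimately show ?case unfolding eq by linarith
  qed
  show ?case using Lim_transform_eventually[OF lim ev] by simp
qed

lemma cov_identity:
  "(\<Sum>l=1..t1. cc a l * (BB a (t1-l) + BB a (t2-l) - 1)) - (BB a t1 - 1) * (BB a t2 - 1)
   = (\<Sum>l=1..t1. cc a l * BB a (t1-l)) + (\<Sum>l=1..t1. cc a l * (BB a (t2-l) - BB a t2))"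
proof -
  have "(\<Sum>l=1..t1. cc a l * (BB a (t1-l) + BB a (t2-l) - 1)) =
     (\<Sum>l=1..t1. cc a l * BB a (t1-l)) + (\<Sum>l=1..t1. cc a l * (BB a (t2-l) - BB a t2)) + (BB a t2 - 1) * (\<Sum>l=1..t1. cc a l)"
    by (simp add: sum.distrib[symmetric] sum_distrib_left algebra_simps)
  then show ?thesis using sum_cc1[of a t1] by simp
qed

lemma cov_lim:
  assumes "0 < a" "a < 1"
  shows "(\<lambda>t2. (\<Sum>l=1..t1. cc a l * (BB a (t1-l) + BB a (t2-l) - 1)) - (BB a t1 - 1) * (BB a t2 - 1))
          \<longlonglongrightarrow> (\<Sum>l=1..t1. cc a l * BB a (t1-l))"
proof -
  have "(\<lambda>t2. (\<Sum>l=1..t1. cc a l * BB a (t1-l)) + (\<Sum>l=1..t1. cc a l * (BB a (t2-l) - BB a t2)))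
      \<longlonglongrightarrow> (\<Sum>l=1..t1. cc a l * BB a (t1-l)) + (\<Sum>l=1..t1. cc a l * 0)"
    by (intro tendsto_add tendsto_const tendsto_sum tendsto_mult shift_to0 assms)
  then show ?thesis unfolding cov_identity by simp
qed

lemma alg1: fixes x y p :: real assumes "p > 0"
  shows "2*(x/p^2) - (y/p)^2 - (y/p)*(1/p) = (2*x - 3*y + 1 - (y-1)^2)/p^2"
proof -
  have "2*(x/p^2) - (y/p)^2 - (y/p)*(1/p) = (2*x - y^2 - y)/p^2"
    by (simp add: power2_eq_square diff_divide_distrib add_divide_distrib)
  also have "2*x - y^2 - y = 2*x - 3*y + 1 - (y-1)^2" by (simp add: power2_eq_square algebra_simps)
  finally show ?thesis by simp
qed

lemma alg2: fixes Cv u1 u2 u3 K p :: real assumes "u1 > 0" "u2 > 0" "u3 > 0" "K > 0" "p > 0"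
  shows "(Cv / (u1 * u2 * p)) / ((K / (u1 * u3)) * (1 / p)) = Cv * u3 / (K * u2)"
  using assms by (simp add: divide_simps)

lemma W_lim:
  assumes a0: "0 < a" and a1: "a < 1"
  shows "(\<lambda>t. (2 * BB (2*a) t - 3 * BB a t + 1 - (BB a t - 1)^2) / (real t powr a)^2)
     \<longlonglongrightarrow> 2 * (1 / Gamma (2*a+1)) - (1 / Gamma (a+1))^2 - (1 / Gamma (a+1)) * 0"
proof -
  have lim: "(\<lambda>t. 2 * (BB (2*a) t / real t powr (2*a)) - (BB a t / real t powr a)^2 - (BB a t / real t powr a) * real t powr (-a))
     \<longlonglongrightarrow> 2 * (1 / Gamma (2*a+1)) - (1 / Gamma (a+1))^2 - (1 / Gamma (a+1)) * 0"
    using a0 by (intro tendsto_diff tendsto_mult tendsto_const tendsto_power BB_asym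
        tendsto_neg_powr filterlim_real_sequentially) auto
  have ev: "eventually (\<lambda>t. 2 * (BB (2*a) t / real t powr (2*a)) - (BB a t / real t powr a)^2 - (BB a t / real t powr a) * real t powr (-a)
      = (2 * BB (2*a) t - 3 * BB a t + 1 - (BB a t - 1)^2) / (real t powr a)^2) sequentially"
    using eventually_ge_at_top[of 1]
  proof eventually_elim
    case (elim t)
    define p where "p = real t powr a"
    have p: "p > 0" using elim by (simp add: p_def)
    have e1: "real t powr (2*a) = p^2" using elim by (simp add: p_def power2_eq_square powr_add[symmetric])
    have e2: "real t powr (-a) = 1 / p" using elim by (simp add: p_def powr_minus_divide)
    show ?case unfolding e1 e2 p_def[symmetric] using p by (rule alg1)
  qed
  show ?thesis using Lim_transform_eventually[OF lim ev] .
qed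

lemma D_pos:
  fixes a :: real
  assumes "0 < a" "a < 1"
  shows "2 * (1 / Gamma (2*a+1)) - (1 / Gamma (a+1))^2 - (1 / Gamma (a+1)) * 0 > 0"
proof -
  have g1: "Gamma (a+1) > 0" "Gamma (2*a+1) > 0" using assms by (auto intro!: Gamma_real_pos)
  have "Gamma (2*a+1) < 2 * Gamma (a+1)^2" using assms by (rule Gamma_ineq)
  then show ?thesis using g1 by (simp add: field_simps power2_eq_square)
qed

lemma ratio_alg:
  fixes Cv V1 W D K p :: real
  assumes "V1 > 0" "W > 0" "D > 0" "K > 0" "p > 0"
  shows "(Cv / sqrt (V1 * (W * p^2))) / ((K / sqrt (V1 * D)) * (1/p)) = Cv * sqrt D / (K * sqrt W)"
proof -
  have "sqrt (V1 * (W * p^2)) = sqrt V1 * sqrt W * p" using assms by (simp add: real_sqrt_mult)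
  moreover have "sqrt (V1 * D) = sqrt V1 * sqrt D" by (simp add: real_sqrt_mult)
  moreover have "sqrt V1 > 0" "sqrt W > 0" "sqrt D > 0" using assms by auto
  ultimately show ?thesis using assms by (simp add: alg2)
qed

context setting begin

lemma part4:
  assumes t1: "t1 \<ge> 1"
  shows "\<exists>C::real. ((\<lambda>t2::nat.
                (covariance M (\<lambda>\<omega>. real (L_count Z t1 \<omega>)) (\<lambda>\<omega>. real (L_count Z t2 \<omega>))
                  / sqrt (variance (\<lambda>\<omega>. real (L_count Z t1 \<omega>))
                          * variance (\<lambda>\<omega>. real (L_count Z t2 \<omega>))))
                / (C * real t2 powr (- \<alpha>)))
              \<longlonglongrightarrow> 1)"
proof -
  define K where "K = (\<Sum>l=1..t1. cc \<alpha> l * BB \<alpha> (t1-l))"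
  have K: "K > 0" unfolding K_def using t1 a0
    by (intro sum_pos mult_pos_pos cc_pos BB_pos) auto
  define V1 where "V1 = variance (\<lambda>\<omega>. real (L_count Z t1 \<omega>))"
  have V1: "V1 > 0" unfolding V1_def using t1 by (rule VAR_pos)
  define D where "D = 2 * (1 / Gamma (2*\<alpha>+1)) - (1 / Gamma (\<alpha>+1))^2 - (1 / Gamma (\<alpha>+1)) * 0"
  have D: "D > 0" unfolding D_def using a0 a1 by (rule D_pos)
  define Cf where "Cf t2 = (\<Sum>l=1..t1. cc \<alpha> l * (BB \<alpha> (t1-l) + BB \<alpha> (t2-l) - 1)) - (BB \<alpha> t1 - 1) * (BB \<alpha> t2 - 1)" for t2
  define Wf where "Wf t = (2 * BB (2*\<alpha>) t - 3 * BB \<alpha> t + 1 - (BB \<alpha> t - 1)^2) / (real t powr \<alpha>)^2" for t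
  have Cl: "Cf \<longlonglongrightarrow> K" unfolding Cf_def K_def using a0 a1 by (intro cov_lim)
  have Wl: "Wf \<longlonglongrightarrow> D" unfolding Wf_def D_def using a0 a1 by (intro W_lim)
  define C where "C = K / sqrt (V1 * D)"
  have lim: "(\<lambda>t2. Cf t2 * sqrt D / (K * sqrt (Wf t2))) \<longlonglongrightarrow> K * sqrt D / (K * sqrt D)"
    using K D by (intro tendsto_divide tendsto_mult tendsto_const Cl tendsto_real_sqrt Wl) auto
  have ev: "eventually (\<lambda>t2. Cf t2 * sqrt D / (K * sqrt (Wf t2)) =
      (covariance M (\<lambda>\<omega>. real (L_count Z t1 \<omega>)) (\<lambda>\<omega>. real (L_count Z t2 \<omega>))
                  / sqrt (variance (\<lambda>\<omega>. real (L_count Z t1 \<omega>))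
                          * variance (\<lambda>\<omega>. real (L_count Z t2 \<omega>))))
                / (C * real t2 powr (- \<alpha>))) sequentially"
    using eventually_ge_at_top[of t1] eventually_ge_at_top[of 1] order_tendstoD(1)[OF Wl D]
  proof eventually_elim
    case (elim t2)
    define p where "p = real t2 powr \<alpha>"
    have p: "p > 0" using elim by (simp add: p_def)
    have cov: "covariance M (\<lambda>\<omega>. real (L_count Z t1 \<omega>)) (\<lambda>\<omega>. real (L_count Z t2 \<omega>)) = Cf t2"
      unfolding Cf_def using elim by (intro COV_le) auto
    have var: "variance (\<lambda>\<omega>. real (L_count Z t2 \<omega>)) = Wf t2 * p^2"
      unfolding VAR Wf_def p_def using p by (simp add: p_def)
    have pm: "real t2 powr (- \<alpha>) = 1 / p" using elim by (simp add: p_def powr_minus_divide)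
    show ?case unfolding cov var pm V1_def[symmetric] C_def
      using V1 elim D K p by (intro ratio_alg[symmetric]) auto
  qed
  have "K * sqrt D / (K * sqrt D) = 1" using K D by simp
  then show ?thesis using Lim_transform_eventually[OF lim ev] by (intro exI[of _ C]) simp
qed

end

theorem mainTheorem2:
  fixes M :: "'a measure" and Z :: "nat \<Rightarrow> 'a \<Rightarrow> nat" and \<alpha> :: real
  assumes "prob_space M"
    and "0 < \<alpha>" and "\<alpha> < 1"
    and "prob_space.indep_vars M (\<lambda>_. count_space UNIV) Z {1..}"
    and "\<And>i k. i \<ge> 1 \<Longrightarrow> k \<ge> 1 \<Longrightarrow>
           measure M {\<omega> \<in> space M. Z i \<omega> = k} = (-1) ^ (k - 1) * (\<alpha> gchoose k)"
  shows "(\<forall>t::nat.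
            prob_space.expectation M (\<lambda>\<omega>. real (L_count Z t \<omega>))
              = ((real t + \<alpha>) gchoose t) - 1)
       \<and> (\<forall>t::nat.
            prob_space.expectation M (\<lambda>\<omega>. (real (L_count Z t \<omega>))\<^sup>2)
              = 2 * ((real t + 2 * \<alpha>) gchoose t) - 3 * ((real t + \<alpha>) gchoose t) + 1)
       \<and> (\<forall>t1 t2::nat.
            prob_space.expectation M (\<lambda>\<omega>. real (L_count Z t1 \<omega>) * real (L_count Z t2 \<omega>))
              = (\<Sum>l=1..min t1 t2. ((real l + \<alpha> - 1) gchoose l) *
                   (((real (t1 - l) + \<alpha>) gchoose (t1 - l))
                    + ((real (t2 - l) + \<alpha>) gchoose (t2 - l)) - 1)))
       \<and> (\<forall>t1::nat. t1 \<ge> 1 \<longrightarrow> (\<exists>C::real.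
            ((\<lambda>t2::nat.
                (covariance M (\<lambda>\<omega>. real (L_count Z t1 \<omega>)) (\<lambda>\<omega>. real (L_count Z t2 \<omega>))
                  / sqrt (prob_space.variance M (\<lambda>\<omega>. real (L_count Z t1 \<omega>))
                          * prob_space.variance M (\<lambda>\<omega>. real (L_count Z t2 \<omega>))))
                / (C * real t2 powr (- \<alpha>)))
              \<longlongrightarrow> 1) at_top))"
proof -
  have S: "setting M Z \<alpha>"
    by (intro setting.intro setting_axioms.intro assms) simp_all
  interpret setting M Z \<alpha> by (rule S)
  have p1: "\<forall>t::nat. expectation (\<lambda>\<omega>. real (L_count Z t \<omega>)) = ((real t + \<alpha>) gchoose t) - 1"
    using E1 unfolding BB_def by blast
  have p2: "expectation (\<lambda>\<omega>. (real (L_count Z t \<omega>))\<^sup>2)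
              = 2 * ((real t + 2 * \<alpha>) gchoose t) - 3 * ((real t + \<alpha>) gchoose t) + 1" for t
  proof -
    have "expectation (\<lambda>\<omega>. (real (L_count Z t \<omega>))\<^sup>2) = expectation (\<lambda>\<omega>. real (L_count Z t \<omega>) * real (L_count Z t \<omega>))"
      by (simp add: power2_eq_square)
    also have "\<dots> = (\<Sum>l=1..t. cc \<alpha> l * (BB \<alpha> (t-l) + BB \<alpha> (t-l) - 1))" by (rule E12_le) simp
    also have "\<dots> = 2 * BB (2*\<alpha>) t - 3 * BB \<alpha> t + 1" by (rule RR_diag)
    finally show ?thesis by (simp only: BB_def)
  qed
  have p3: "expectation (\<lambda>\<omega>. real (L_count Z t1 \<omega>) * real (L_count Z t2 \<omega>))
              = (\<Sum>l=1..min t1 t2. ((real l + \<alpha> - 1) gchoose l) *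
                   (((real (t1 - l) + \<alpha>) gchoose (t1 - l))
                    + ((real (t2 - l) + \<alpha>) gchoose (t2 - l)) - 1))" for t1 t2
  proof (cases "t1 \<le> t2")
    case True
    have "min t1 t2 = t1" using True by simp
    then show ?thesis using E12_le[OF True] by (simp only: BB_def cc_def)
  next
    case False
    then have le: "t2 \<le> t1" by simp
    have "expectation (\<lambda>\<omega>. real (L_count Z t1 \<omega>) * real (L_count Z t2 \<omega>))
        = expectation (\<lambda>\<omega>. real (L_count Z t2 \<omega>) * real (L_count Z t1 \<omega>))"
      by (simp add: mult.commute)
    also have "\<dots> = (\<Sum>l=1..t2. cc \<alpha> l * (BB \<alpha> (t2-l) + BB \<alpha> (t1-l) - 1))" by (rule E12_le[OF le])
    also have "\<dots> = (\<Sum>l=1..t2. cc \<alpha> l * (BB \<alpha> (t1-l) + BB \<alpha> (t2-l) - 1))"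
      by (simp add: add.commute)
    finally have e: "expectation (\<lambda>\<omega>. real (L_count Z t1 \<omega>) * real (L_count Z t2 \<omega>)) = (\<Sum>l=1..t2. cc \<alpha> l * (BB \<alpha> (t1-l) + BB \<alpha> (t2-l) - 1))" .
    have "min t1 t2 = t2" using le by simp
    then show ?thesis using e by (simp only: BB_def cc_def)
  qed
  show ?thesis
    apply (intro conjI allI impI)
       apply (rule p1[rule_format])
      apply (rule p2)
     apply (rule p3)
    apply (erule part4)
    done
qed

end
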